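(* Fix $p\ge 2$. For any $c_1,c_2>0$ such that $N_p^{c_1}$ and $N_p^{c_2}$ both exist, one of them is contained in the other (the family of all existing sets $N_p^c$ is totally ordered by inclusion), and $\bigcup_{c} N_p^c\subset D_a(0)$, the union being over all $c>0$ for which $N_p^c$ exists.
   Context: Let $f:\mathbb{R}^n\to\mathbb{R}^n$ be real-analytic with $f(0)=0$, and assume all eigenvalues of $A=\frac{\partial f}{\partial x}(0)$ have negative real parts. $D_a(0)$ is the domain of attraction of the steady state $0$ of $\dot x=f(x)$ (initial states whose solutions are defined for all $t\ge0$ and tend to $0$). $\|\cdot\|$ is the Euclidean norm. Let $V$ be the real-analytic function on a neighborhood of $0$ with $\langle\nabla V(x),f(x)\rangle=-\|x\|^2$, $V(0)=0$, and for $p\ge 2$ let $V_p$ be the Taylor polynomial of $V$ at $0$ of degree $p$ (terms of degrees $2,\dots,p$). Let $G_p$ be the maximal domain (connected open set) containing $0$ such that $V_p(x)>0$ and $\langle\nabla V_p(x),f(x)\rangle<0$ for all $x\in G_p\setminus\{0\}$. A closed connected set $S\subset\mathbb{R}^n$ is called $(p,c)$-admissible if: $0\in\mathrm{Int}(S)$; $V_p(x)<c$ for all $x\in\mathrm{Int}(S)$; $V_p(x)=c$ for all $x\in\partial S$; and $S$ is compact with $S\subset G_p$. For given $p,c$ there is at most one such set; when it exists it is denoted $N_p^c$. *)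

theory Defs
  imports "HOL-Analysis.Analysis"
begin

definition mono_at :: "('n::finite \<Rightarrow> nat) \<Rightarrow> real^'n \<Rightarrow> real^'n \<Rightarrow> real" where
  "mono_at \<alpha> a x = (\<Prod>i\<in>UNIV. (x$i - a$i) ^ \<alpha> i)"

definition mdeg :: "('n::finite \<Rightarrow> nat) \<Rightarrow> nat" where
  "mdeg \<alpha> = (\<Sum>i\<in>UNIV. \<alpha> i)"

text \<open>Real-analytic scalar function on a set U: locally the (unconditionally,
  hence absolutely) convergent sum of a multivariate power series.\<close>

definition real_analytic_on :: "(real^'n::finite \<Rightarrow> real) \<Rightarrow> (real^'n) set \<Rightarrow> bool" where
  "real_analytic_on g U \<longleftrightarrow>
     (\<forall>a\<in>U. \<exists>r>0. \<exists>c :: ('n \<Rightarrow> nat) \<Rightarrow> real.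
        \<forall>x\<in>ball a r. ((\<lambda>\<alpha>. c \<alpha> * mono_at \<alpha> a x) has_sum g x) UNIV)"

definition real_analytic_vf :: "(real^'n::finite \<Rightarrow> real^'n) \<Rightarrow> bool" where
  "real_analytic_vf f \<longleftrightarrow> (\<forall>k. real_analytic_on (\<lambda>x. f x $ k) UNIV)"

definition power_series_at0 :: "(('n::finite \<Rightarrow> nat) \<Rightarrow> real) \<Rightarrow> (real^'n \<Rightarrow> real) \<Rightarrow> bool" where
  "power_series_at0 c V \<longleftrightarrow>
     (\<exists>r>0. \<forall>x\<in>ball 0 r. ((\<lambda>\<alpha>. c \<alpha> * mono_at \<alpha> 0 x) has_sum V x) UNIV)"

definition taylor_poly :: "(('n::finite \<Rightarrow> nat) \<Rightarrow> real) \<Rightarrow> nat \<Rightarrow> real^'n \<Rightarrow> real" where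
  "taylor_poly c p x = (\<Sum>\<alpha>\<in>{\<alpha>. 2 \<le> mdeg \<alpha> \<and> mdeg \<alpha> \<le> p}. c \<alpha> * mono_at \<alpha> 0 x)"

definition complex_eigenvalue :: "real^'n^'n \<Rightarrow> complex \<Rightarrow> bool" where
  "complex_eigenvalue A mu \<longleftrightarrow>
     (\<exists>v :: complex^'n. v \<noteq> 0 \<and>
        (\<chi> i. \<Sum>j\<in>UNIV. complex_of_real (A$i$j) * v$j) = (\<chi> i. mu * v$i))"

definition domain_of_attraction :: "(real^'n::finite \<Rightarrow> real^'n) \<Rightarrow> (real^'n) set" where
  "domain_of_attraction f =
     {x0. \<exists>\<phi> :: real \<Rightarrow> real^'n. \<phi> 0 = x0 \<and>
        (\<forall>t\<ge>0. (\<phi> has_vector_derivative f (\<phi> t)) (at t within {0..})) \<and>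
        (\<phi> \<longlongrightarrow> 0) at_top}"

definition max_domain :: "(real^'n::finite \<Rightarrow> real) \<Rightarrow> (real^'n \<Rightarrow> real^'n) \<Rightarrow> (real^'n) set" where
  "max_domain W f = \<Union>{U. open U \<and> connected U \<and> 0 \<in> U \<and>
       (\<forall>x\<in>U - {0}. W x > 0 \<and> frechet_derivative W (at x) (f x) < 0)}"

definition admissible :: "(real^'n::finite \<Rightarrow> real) \<Rightarrow> (real^'n \<Rightarrow> real^'n) \<Rightarrow> real \<Rightarrow> (real^'n) set \<Rightarrow> bool" where
  "admissible W f c S \<longleftrightarrow>
     closed S \<and> connected S \<and> 0 \<in> interior S \<and>
     (\<forall>x\<in>interior S. W x < c) \<and> (\<forall>x\<in>frontier S. W x = c) \<and>
     compact S \<and> S \<subseteq> max_domain W f"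

end

theory Submission
  imports Defs
begin

lemma int_pow_fact:
  fixes t :: real
  assumes "0 \<le> t"
  shows "((\<lambda>s. s^k / fact k) has_integral (t^(Suc k) / fact (Suc k))) {0..t}"
proof -
  have "((\<lambda>s. s^k / fact k) has_integral ((\<lambda>s. s^(Suc k) / fact (Suc k)) t - (\<lambda>s. s^(Suc k) / fact (Suc k)) 0)) {0..t}"
  proof (rule fundamental_theorem_of_calculus[OF assms])
    fix x assume "x \<in> {0..t}"
    have "((\<lambda>s. s^(Suc k) / fact (Suc k)) has_real_derivative (real (Suc k) * x^k / fact (Suc k))) (at x within {0..t})"
      using DERIV_cdivide[OF DERIV_pow[of "Suc k" x], of "fact (Suc k)"]
      by (auto intro: has_field_derivative_at_within)
    moreover have "real (Suc k) * x^k / fact (Suc k) = x^k / fact k"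
    proof -
      have "fact (Suc k) = real (Suc k) * (fact k :: real)" by (simp only: fact_Suc of_nat_mult)
      then show ?thesis by (simp del: of_nat_Suc)
    qed
    ultimately show "((\<lambda>s. s^(Suc k) / fact (Suc k)) has_vector_derivative (x^k / fact k)) (at x within {0..t})"
      by (simp add: has_real_derivative_iff_has_vector_derivative)
  qed
  then show ?thesis by simp
qed

lemma lipschitz_cont:
  fixes g :: "'a::real_normed_vector \<Rightarrow> 'b::real_normed_vector"
  assumes L: "\<And>x y. norm (g x - g y) \<le> L * norm (x - y)"
  shows "continuous_on UNIV g"
proof -
  have L0: "norm (g x - g y) \<le> (\<bar>L\<bar> + 1) * norm (x - y)" for x y
    using L[of x y] by (smt (verit) mult_right_mono norm_ge_zero)
  show ?thesis
    unfolding continuous_on_iff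
  proof (intro ballI allI impI)
    fix x and e :: real assume "0 < e"
    show "\<exists>d>0. \<forall>x'\<in>UNIV. dist x' x < d \<longrightarrow> dist (g x') (g x) < e"
    proof (intro exI[of _ "e / (\<bar>L\<bar> + 1)"] conjI ballI impI)
      show "0 < e / (\<bar>L\<bar> + 1)" using \<open>0 < e\<close> by simp
      fix x' assume "dist x' x < e / (\<bar>L\<bar> + 1)"
      then have "(\<bar>L\<bar> + 1) * norm (x' - x) < e"
        by (simp add: dist_norm field_simps)
      then show "dist (g x') (g x) < e" using L0[of x' x] by (simp add: dist_norm)
    qed
  qed
qed

lemma picard_global:
  fixes g :: "'a::euclidean_space \<Rightarrow> 'a"
  assumes L0: "\<And>x y. norm (g x - g y) \<le> L0 * norm (x - y)"
  shows "\<exists>\<phi>. \<phi> 0 = x0 \<and> (\<forall>t\<ge>0. (\<phi> has_vector_derivative g (\<phi> t)) (at t within {0..}))"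
proof -
  define L where "L = max L0 0"
  have Lpos: "L \<ge> 0" by (simp add: L_def)
  have L: "norm (g x - g y) \<le> L * norm (x - y)" for x y
    using L0[of x y] by (smt (verit) L_def mult_right_mono norm_ge_zero)
  have gc: "continuous_on UNIV g" by (rule lipschitz_cont[OF L])
  define F where "F = (\<lambda>(p::real \<Rightarrow> 'a) t. x0 + integral {0..t} (\<lambda>s. g (p s)))"
  define phi where "phi k = (F ^^ k) (\<lambda>t. x0)" for k
  have phi0: "phi 0 = (\<lambda>t. x0)" by (simp add: phi_def)
  have phiS: "phi (Suc k) t = x0 + integral {0..t} (\<lambda>s. g (phi k s))" for k t
    by (simp add: phi_def F_def)
  have gcomp: "continuous_on {0..T} (\<lambda>s. g (p s))" if "continuous_on {0..T} p" for p and T :: real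
    using continuous_on_compose2[OF gc that] by simp
  have cont: "continuous_on {0..T} (phi k)" for k T
  proof (induction k)
    case 0 then show ?case by (simp add: phi0)
  next
    case (Suc k)
    have "continuous_on {0..T} (\<lambda>t. integral {0..t} (\<lambda>s. g (phi k s)))"
      by (rule indefinite_integral_continuous_1[OF integrable_continuous_real[OF gcomp[OF Suc]]])
    then show ?case unfolding phiS by (intro continuous_intros)
  qed
  have intg: "(\<lambda>s. g (phi k s)) integrable_on {0..t}" for k t
    by (rule integrable_continuous_real[OF gcomp[OF cont]])
  define B where "B = norm (g x0)"
  have bound: "norm (phi (Suc k) t - phi k t) \<le> B * L^k * (t^(Suc k) / fact (Suc k))" if "t \<ge> 0" for k t
    using that
  proof (induction k arbitrary: t)
    case 0
    then show ?case by (simp add: phiS phi0 B_def)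
  next
    case (Suc k)
    have "phi (Suc (Suc k)) t - phi (Suc k) t = integral {0..t} (\<lambda>s. g (phi (Suc k) s) - g (phi k s))"
      unfolding phiS[of "Suc k" t] phiS[of k t] by (simp add: integral_diff[OF intg intg])
    also have "norm \<dots> \<le> integral {0..t} (\<lambda>s. (B * L^(Suc k)) * (s^(Suc k) / fact (Suc k)))"
    proof (rule integral_norm_bound_integral)
      show "(\<lambda>s. g (phi (Suc k) s) - g (phi k s)) integrable_on {0..t}"
        by (intro integrable_diff intg)
      show "(\<lambda>s. (B * L^(Suc k)) * (s^(Suc k) / fact (Suc k))) integrable_on {0..t}"
        by (intro integrable_continuous_real continuous_intros) (auto simp del: fact_Suc)
      fix s assume s: "s \<in> {0..t}"
      have "norm (g (phi (Suc k) s) - g (phi k s)) \<le> L * norm (phi (Suc k) s - phi k s)"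
        by (rule L)
      also have "\<dots> \<le> L * (B * L^k * (s^(Suc k) / fact (Suc k)))"
        using Suc.IH[of s] s Lpos by (intro mult_left_mono) auto
      finally show "norm (g (phi (Suc k) s) - g (phi k s)) \<le> (B * L^(Suc k)) * (s^(Suc k) / fact (Suc k))"
        by (simp add: algebra_simps)
    qed
    also have "\<dots> = (B * L^(Suc k)) * (t^(Suc (Suc k)) / fact (Suc (Suc k)))"
      by (rule integral_unique[OF has_integral_mult_right[OF int_pow_fact[OF Suc.prems, of "Suc k"]]])
    finally show ?case by (simp add: algebra_simps)
  qed
  define Phi where "Phi t = x0 + (\<Sum>i. phi (Suc i) t - phi i t)" for t
  have ul: "uniform_limit {0..T} phi Phi sequentially" if "T \<ge> 0" for T
  proof -
    define M where "M k = B * L^k * (T^(Suc k) / fact (Suc k))" for k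
    have "uniform_limit {0..T} (\<lambda>n t. \<Sum>i<n. phi (Suc i) t - phi i t) (\<lambda>t. \<Sum>i. phi (Suc i) t - phi i t) sequentially"
    proof (rule Weierstrass_m_test)
      fix n t assume t: "t \<in> {0..T}"
      have "norm (phi (Suc n) t - phi n t) \<le> B * L^n * (t^(Suc n) / fact (Suc n))"
        using bound[of t n] t by simp
      also have "\<dots> \<le> M n" unfolding M_def using t Lpos
        by (intro mult_left_mono divide_right_mono power_mono) (auto simp: B_def)
      finally show "norm (phi (Suc n) t - phi n t) \<le> M n" .
    next
      have s1: "summable (\<lambda>k. (B * T) * ((L * T)^k /\<^sub>R fact k))"
        by (intro summable_mult summable_exp_generic)
      show "summable M"
      proof (rule summable_comparison_test[OF _ s1], intro exI allI impI)
        fix k :: nat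
        have "fact k \<le> (fact (Suc k) :: real)" by (rule fact_mono) simp
        then have "T^(Suc k) / fact (Suc k) \<le> T^(Suc k) / fact k"
          using that by (intro divide_left_mono) auto
        moreover have "M k \<ge> 0" unfolding M_def using that Lpos by (simp add: B_def)
        moreover have "B * L^k \<ge> 0" using Lpos by (simp add: B_def)
        ultimately have "norm (M k) \<le> B * L^k * (T^(Suc k) / fact k)"
          apply -
        proof -
          assume a: "T^(Suc k) / fact (Suc k) \<le> T^(Suc k) / fact k" "M k \<ge> 0" "B * L^k \<ge> 0"
          have "norm (M k) = M k" using a(2) by simp
          also have "\<dots> = (B * L^k) * (T^(Suc k) / fact (Suc k))" by (simp only: M_def)
          also have "\<dots> \<le> (B * L^k) * (T^(Suc k) / fact k)" by (rule mult_left_mono[OF a(1) a(3)])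
          finally show ?thesis by simp
        qed
        also have "\<dots> = (B * T) * ((L * T)^k /\<^sub>R fact k)"
          by (simp add: power_mult_distrib field_simps)
        finally show "norm (M k) \<le> (B * T) * ((L * T)^k /\<^sub>R fact k)" .
      qed
    qed
    moreover have tel: "(\<Sum>i<n. phi (Suc i) x - phi i x) = phi n x - x0" for n x
      using sum_lessThan_telescope[of "\<lambda>i. phi i x" n] by (simp add: phi0)
    ultimately show ?thesis
      unfolding uniform_limit_iff
      by (simp add: Phi_def tel dist_norm algebra_simps)
  qed
  have Phic: "continuous_on {0..T} Phi" if "T \<ge> 0" for T
    by (rule uniform_limit_theorem[OF _ ul[OF that]]) (auto simp: cont)
  have inteq: "Phi t = x0 + integral {0..t} (\<lambda>s. g (Phi s))" if "t \<ge> 0" for t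
  proof -
    have ulg: "uniform_limit {0..t} (\<lambda>n s. g (phi n s)) (\<lambda>s. g (Phi s)) sequentially"
      unfolding uniform_limit_iff
    proof (intro allI impI)
      fix e :: real assume "0 < e"
      then have "0 < e / (L + 1)" using Lpos by simp
      then have "\<forall>\<^sub>F n in sequentially. \<forall>s\<in>{0..t}. dist (phi n s) (Phi s) < e / (L + 1)"
        using ul[OF that] unfolding uniform_limit_iff by blast
      then show "\<forall>\<^sub>F n in sequentially. \<forall>s\<in>{0..t}. dist (g (phi n s)) (g (Phi s)) < e"
      proof (rule eventually_mono, intro ballI)
        fix n s assume H: "\<forall>s\<in>{0..t}. dist (phi n s) (Phi s) < e / (L + 1)" and s: "s \<in> {0..t}"
        have "dist (g (phi n s)) (g (Phi s)) \<le> L * dist (phi n s) (Phi s)"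
          using L by (simp add: dist_norm)
        also have "\<dots> \<le> (L + 1) * dist (phi n s) (Phi s)" by (simp add: algebra_simps)
        also have "\<dots> < (L + 1) * (e / (L + 1))"
          using H s Lpos by (intro mult_strict_left_mono) auto
        also have "\<dots> = e" using Lpos by simp
        finally show "dist (g (phi n s)) (g (Phi s)) < e" .
      qed
    qed
    obtain I J where I: "\<And>n. ((\<lambda>s. g (phi n s)) has_integral I n) {0..t}"
      and J: "((\<lambda>s. g (Phi s)) has_integral J) {0..t}" and IJ: "I \<longlonglongrightarrow> J"
      by (rule uniform_limit_integral[OF ulg]) (auto intro: gcomp cont)
    have "(\<lambda>n. phi (Suc n) t) \<longlonglongrightarrow> x0 + J"
    proof -
      have "integral {0..t} (\<lambda>s. g (phi n s)) = I n" for n using I[of n] by (rule integral_unique)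
      then show ?thesis unfolding phiS using IJ by (simp add: tendsto_add)
    qed
    moreover have "(\<lambda>n. phi (Suc n) t) \<longlonglongrightarrow> Phi t"
      using LIMSEQ_Suc[OF tendsto_uniform_limitI[OF ul[OF that], of t]] that by simp
    ultimately have "Phi t = x0 + J" using LIMSEQ_unique by blast
    then show ?thesis using J by (simp add: integral_unique)
  qed
  show ?thesis
  proof (intro exI conjI allI impI)
    show "Phi 0 = x0" using inteq[of 0] by simp
    fix t :: real assume t: "0 \<le> t"
    define T where "T = t + 1"
    have tT: "t \<in> {0..T}" using t by (simp add: T_def)
    have "((\<lambda>u. x0 + integral {0..u} (\<lambda>s. g (Phi s))) has_vector_derivative g (Phi t)) (at t within {0..T})"
      using integral_has_vector_derivative[OF gcomp[OF Phic] tT] t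
      by (auto intro!: derivative_eq_intros simp: T_def)
    then have "(Phi has_vector_derivative g (Phi t)) (at t within {0..T})"
      by (rule has_vector_derivative_transform_within[where d=1]) (use tT inteq in auto)
    moreover have "at t within {0..T} = at t within {0..}"
      by (rule at_within_nhd[where S="{..<T}"]) (auto simp: T_def)
    ultimately show "(Phi has_vector_derivative g (Phi t)) (at t within {0..})" by simp
  qed
qed

lemma pow_diff_bound:
  fixes u v rho D :: real
  assumes "0 \<le> rho" "\<bar>u\<bar> \<le> rho" "\<bar>v\<bar> \<le> rho" "\<bar>u - v\<bar> \<le> D"
  shows "rho * \<bar>u^k - v^k\<bar> \<le> real k * rho^k * D"
proof (induction k)
  case 0 then show ?case by simp
next
  case (Suc k)
  have D0: "D \<ge> 0" using assms(4) by linarith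
  have "u^(Suc k) - v^(Suc k) = u * (u^k - v^k) + v^k * (u - v)" by (simp add: algebra_simps)
  then have "rho * \<bar>u^(Suc k) - v^(Suc k)\<bar> \<le> \<bar>u\<bar> * (rho * \<bar>u^k - v^k\<bar>) + \<bar>v\<bar>^k * (rho * \<bar>u - v\<bar>)"
  proof -
    have "\<bar>u * (u^k - v^k) + v^k * (u - v)\<bar> \<le> \<bar>u\<bar> * \<bar>u^k - v^k\<bar> + \<bar>v\<bar>^k * \<bar>u - v\<bar>"
      by (metis abs_triangle_ineq abs_mult power_abs)
    then have "rho * \<bar>u * (u^k - v^k) + v^k * (u - v)\<bar> \<le> rho * (\<bar>u\<bar> * \<bar>u^k - v^k\<bar> + \<bar>v\<bar>^k * \<bar>u - v\<bar>)"
      using assms(1) by (rule mult_left_mono)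
    then show ?thesis using \<open>u^(Suc k) - v^(Suc k) = _\<close> by (simp add: algebra_simps)
  qed
  also have "\<dots> \<le> rho * (real k * rho^k * D) + rho^k * (rho * D)"
  proof (rule add_mono)
    show "\<bar>u\<bar> * (rho * \<bar>u^k - v^k\<bar>) \<le> rho * (real k * rho^k * D)"
      by (rule mult_mono[OF assms(2) Suc.IH assms(1)]) (simp add: assms(1))
    show "\<bar>v\<bar>^k * (rho * \<bar>u - v\<bar>) \<le> rho^k * (rho * D)"
      using assms by (intro mult_mono power_mono) auto
  qed
  also have "\<dots> = real (Suc k) * rho^(Suc k) * D" by (simp add: algebra_simps)
  finally show ?case .
qed

lemma prod_abs_bound:
  fixes u :: "'i \<Rightarrow> real"
  assumes "\<And>i. i \<in> I \<Longrightarrow> \<bar>u i\<bar> \<le> rho"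
  shows "\<bar>\<Prod>i\<in>I. u i ^ a i\<bar> \<le> rho ^ (\<Sum>i\<in>I. a i)"
proof -
  have "\<bar>\<Prod>i\<in>I. u i ^ a i\<bar> = (\<Prod>i\<in>I. \<bar>u i\<bar> ^ a i)" by (simp add: abs_prod power_abs)
  also have "\<dots> \<le> (\<Prod>i\<in>I. rho ^ a i)"
    using assms by (intro prod_mono) (auto intro: power_mono)
  also have "\<dots> = rho ^ (\<Sum>i\<in>I. a i)" by (simp add: power_sum)
  finally show ?thesis .
qed

lemma prod_diff_bound:
  fixes u v :: "'i \<Rightarrow> real"
  assumes "finite I" "0 \<le> rho"
    and "\<And>i. i \<in> I \<Longrightarrow> \<bar>u i\<bar> \<le> rho" "\<And>i. i \<in> I \<Longrightarrow> \<bar>v i\<bar> \<le> rho"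
    and "\<And>i. i \<in> I \<Longrightarrow> \<bar>u i - v i\<bar> \<le> D" "D \<ge> 0"
  shows "rho * \<bar>(\<Prod>i\<in>I. u i ^ a i) - (\<Prod>i\<in>I. v i ^ a i)\<bar> \<le> real (\<Sum>i\<in>I. a i) * rho ^ (\<Sum>i\<in>I. a i) * D"
  using assms
proof (induction I rule: finite_induct)
  case empty then show ?case by simp
next
  case (insert j F)
  define A where "A = (\<Prod>i\<in>F. u i ^ a i)"
  define B where "B = (\<Prod>i\<in>F. v i ^ a i)"
  define m where "m = (\<Sum>i\<in>F. a i)"
  have IH: "rho * \<bar>A - B\<bar> \<le> real m * rho ^ m * D"
    unfolding A_def B_def m_def using insert by auto
  have Bb: "\<bar>B\<bar> \<le> rho ^ m" unfolding B_def m_def by (rule prod_abs_bound) (use insert in auto)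
  have ab: "\<bar>u j ^ a j\<bar> \<le> rho ^ a j" using insert by (simp add: power_abs power_mono)
  have jd: "rho * \<bar>u j ^ a j - v j ^ a j\<bar> \<le> real (a j) * rho ^ a j * D"
    by (rule pow_diff_bound) (use insert in auto)
  have eq: "u j ^ a j * A - v j ^ a j * B = u j ^ a j * (A - B) + B * (u j ^ a j - v j ^ a j)"
    by (simp add: algebra_simps)
  have "rho * \<bar>u j ^ a j * A - v j ^ a j * B\<bar> \<le> \<bar>u j ^ a j\<bar> * (rho * \<bar>A - B\<bar>) + \<bar>B\<bar> * (rho * \<bar>u j ^ a j - v j ^ a j\<bar>)"
  proof -
    have "\<bar>u j ^ a j * (A - B) + B * (u j ^ a j - v j ^ a j)\<bar> \<le> \<bar>u j ^ a j\<bar> * \<bar>A - B\<bar> + \<bar>B\<bar> * \<bar>u j ^ a j - v j ^ a j\<bar>"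
      by (metis abs_triangle_ineq abs_mult)
    then have "rho * \<bar>u j ^ a j * (A - B) + B * (u j ^ a j - v j ^ a j)\<bar> \<le> rho * (\<bar>u j ^ a j\<bar> * \<bar>A - B\<bar> + \<bar>B\<bar> * \<bar>u j ^ a j - v j ^ a j\<bar>)"
      using assms(2) by (rule mult_left_mono)
    then show ?thesis unfolding eq by (simp add: algebra_simps)
  qed
  also have "\<dots> \<le> rho ^ a j * (real m * rho ^ m * D) + rho ^ m * (real (a j) * rho ^ a j * D)"
    using assms(2) by (intro add_mono mult_mono[OF ab IH] mult_mono[OF Bb jd]) auto
  also have "\<dots> = real (a j + m) * rho ^ (a j + m) * D" by (simp add: algebra_simps power_add)
  finally show ?case using insert.hyps by (simp add: A_def B_def m_def)
qed

lemma real_le_two_pow: "real d \<le> 2 ^ d"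
proof -
  have "d \<le> 2 ^ d" using less_exp[of d] by simp
  then have "real d \<le> real (2 ^ d)" by (simp only: of_nat_le_iff)
  then show ?thesis by simp
qed

lemma analytic_loc_lip:
  fixes h :: "real^'n \<Rightarrow> real"
  assumes "real_analytic_on h UNIV"
  shows "\<exists>\<delta>>0. \<exists>L. \<forall>x\<in>ball a \<delta>. \<forall>y\<in>ball a \<delta>. \<bar>h x - h y\<bar> \<le> L * norm (x - y)"
proof -
  obtain r cf where r: "r > 0"
    and hs: "\<And>x. x \<in> ball a r \<Longrightarrow> ((\<lambda>\<alpha>. cf \<alpha> * mono_at \<alpha> a x) has_sum h x) UNIV"
    using assms unfolding real_analytic_on_def by blast
  define s where "s = r / (2 * real CARD('n))"
  have s0: "s > 0" using r by (simp add: s_def)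
  have sr: "s / 2 < r"
  proof -
    have "real CARD('n) \<ge> 1" by simp
    then have "s \<le> r / 2" unfolding s_def using r by (simp add: field_simps)
    then show ?thesis using r by simp
  qed
  define y0 where "y0 = a + (\<chi> i. s)"
  have "norm (y0 - a) \<le> (\<Sum>i\<in>UNIV. \<bar>(y0 - a)$i\<bar>)" by (rule norm_le_l1_cart)
  also have "\<dots> = real CARD('n) * s" using s0 by (simp add: y0_def)
  also have "\<dots> < r" using r by (simp add: s_def)
  finally have y0b: "y0 \<in> ball a r" by (simp add: dist_norm norm_minus_commute)
  have my: "mono_at \<alpha> a y0 = s ^ mdeg \<alpha>" for \<alpha>
    by (simp add: mono_at_def mdeg_def y0_def power_sum)
  have sum1: "(\<lambda>\<alpha>. cf \<alpha> * s ^ mdeg \<alpha>) summable_on UNIV"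
    using hs[OF y0b] my unfolding summable_on_def by auto
  have sum2: "(\<lambda>\<alpha>. \<bar>cf \<alpha>\<bar> * s ^ mdeg \<alpha>) summable_on UNIV"
  proof -
    have "(\<lambda>\<alpha>. norm (cf \<alpha> * s ^ mdeg \<alpha>)) summable_on UNIV"
      by (rule summable_on_iff_abs_summable_on_real[THEN iffD1, OF sum1])
    moreover have "norm (cf \<alpha> * s ^ mdeg \<alpha>) = \<bar>cf \<alpha>\<bar> * s ^ mdeg \<alpha>" for \<alpha>
      using s0 by (simp add: abs_mult)
    ultimately show ?thesis by simp
  qed
  define Mt where "Mt = infsum (\<lambda>\<alpha>. \<bar>cf \<alpha>\<bar> * s ^ mdeg \<alpha>) UNIV"
  show ?thesis
  proof -
  have key: "\<bar>h x - h y\<bar> \<le> (2/s * Mt) * norm (x - y)" if x: "x \<in> ball a (s/2)" and y: "y \<in> ball a (s/2)" for x y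
  proof -
    have xr: "x \<in> ball a r" and yr: "y \<in> ball a r" using x y sr by auto
    define D where "D = norm (x - y)"
    have tb: "\<bar>cf \<alpha> * mono_at \<alpha> a x - cf \<alpha> * mono_at \<alpha> a y\<bar> \<le> (2/s * D) * (\<bar>cf \<alpha>\<bar> * s ^ mdeg \<alpha>)" for \<alpha>
    proof -
      have cx: "\<bar>x$i - a$i\<bar> \<le> s/2" for i
        using component_le_norm_cart[of "x - a" i] x by (simp add: dist_norm norm_minus_commute)
      have cy: "\<bar>y$i - a$i\<bar> \<le> s/2" for i
        using component_le_norm_cart[of "y - a" i] y by (simp add: dist_norm norm_minus_commute)
      have cd: "\<bar>(x$i - a$i) - (y$i - a$i)\<bar> \<le> D" for i
        using component_le_norm_cart[of "x - y" i] by (simp add: D_def)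
      have pb: "(s/2) * \<bar>mono_at \<alpha> a x - mono_at \<alpha> a y\<bar> \<le> real (mdeg \<alpha>) * (s/2)^(mdeg \<alpha>) * D"
        unfolding mono_at_def mdeg_def
        by (rule prod_diff_bound) (use s0 cx cy cd in \<open>auto simp: D_def\<close>)
      have "real (mdeg \<alpha>) * (s/2)^(mdeg \<alpha>) = real (mdeg \<alpha>) / 2^(mdeg \<alpha>) * s^(mdeg \<alpha>)"
        by (simp add: power_divide)
      also have "\<dots> \<le> 1 * s^(mdeg \<alpha>)"
        using real_le_two_pow[of "mdeg \<alpha>"] s0 by (intro mult_right_mono) auto
      finally have "real (mdeg \<alpha>) * (s/2)^(mdeg \<alpha>) * D \<le> s^(mdeg \<alpha>) * D"
        by (intro mult_right_mono) (auto simp: D_def)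
      with pb have "(s/2) * \<bar>mono_at \<alpha> a x - mono_at \<alpha> a y\<bar> \<le> s^(mdeg \<alpha>) * D" by linarith
      then have "\<bar>mono_at \<alpha> a x - mono_at \<alpha> a y\<bar> \<le> (2/s) * (s^(mdeg \<alpha>) * D)"
        using s0 by (simp add: field_simps)
      then have "\<bar>cf \<alpha>\<bar> * \<bar>mono_at \<alpha> a x - mono_at \<alpha> a y\<bar> \<le> \<bar>cf \<alpha>\<bar> * ((2/s) * (s^(mdeg \<alpha>) * D))"
        by (intro mult_left_mono) auto
      moreover have "\<bar>cf \<alpha> * mono_at \<alpha> a x - cf \<alpha> * mono_at \<alpha> a y\<bar> = \<bar>cf \<alpha>\<bar> * \<bar>mono_at \<alpha> a x - mono_at \<alpha> a y\<bar>"
        by (simp only: abs_mult flip: right_diff_distrib)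
      moreover have "\<bar>cf \<alpha>\<bar> * ((2/s) * (s^(mdeg \<alpha>) * D)) = (2/s * D) * (\<bar>cf \<alpha>\<bar> * s ^ mdeg \<alpha>)"
        by (simp only: mult_ac)
      ultimately show ?thesis by metis
    qed
    have hsd: "((\<lambda>\<alpha>. cf \<alpha> * mono_at \<alpha> a x - cf \<alpha> * mono_at \<alpha> a y) has_sum (h x - h y)) UNIV"
      using has_sum_add[OF hs[OF xr] has_sum_uminusI[OF hs[OF yr]]] by simp
    have hb: "((\<lambda>\<alpha>. (2/s*D) * (\<bar>cf \<alpha>\<bar> * s ^ mdeg \<alpha>)) has_sum ((2/s*D) * Mt)) UNIV"
      by (rule has_sum_cmult_right) (simp add: Mt_def sum2)
    have "h x - h y \<le> (2/s*D)*Mt"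
      by (rule has_sum_mono[OF hsd hb]) (use tb in \<open>auto simp: abs_le_iff\<close>)
    moreover have "-(h x - h y) \<le> (2/s*D)*Mt"
      by (rule has_sum_mono[OF has_sum_uminusI[OF hsd] hb]) (use tb in \<open>auto simp: abs_le_iff\<close>)
    ultimately show "\<bar>h x - h y\<bar> \<le> (2/s * Mt) * norm (x - y)"
      by (simp add: D_def algebra_simps)
  qed
  show ?thesis using key s0 by (intro exI[of _ "s/2"] exI[of _ "(2/s) * Mt"] conjI ballI) auto
  qed
qed

lemma line_decr:
  fixes W :: "'a::real_normed_vector \<Rightarrow> real"
  assumes dW: "\<And>x. (W has_derivative DW x) (at x)"
    and neg: "\<And>s. s \<in> {0..t} \<Longrightarrow> DW (z + s *\<^sub>R v) v < 0"
    and t: "t > 0"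
  shows "W (z + t *\<^sub>R v) < W z"
proof -
  have der: "((\<lambda>s. W (z + s *\<^sub>R v)) has_derivative (\<lambda>u. DW (z + s *\<^sub>R v) (u *\<^sub>R v))) (at s within {0..t})" for s
  proof -
    have "((\<lambda>s. z + s *\<^sub>R v) has_derivative (\<lambda>u. u *\<^sub>R v)) (at s within {0..t})"
      by (auto intro!: derivative_eq_intros)
    from has_derivative_compose[OF this dW[THEN has_derivative_at_withinI]]
    show ?thesis by (simp add: o_def)
  qed
  obtain \<xi> where \<xi>: "\<xi> \<in> {0<..<t}" and eq: "W (z + t *\<^sub>R v) - W (z + 0 *\<^sub>R v) = DW (z + \<xi> *\<^sub>R v) ((t - 0) *\<^sub>R v)"
    using mvt_simple[OF t der] by blast
  have lin: "linear (DW (z + \<xi> *\<^sub>R v))" using dW by (rule has_derivative_linear)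
  have "DW (z + \<xi> *\<^sub>R v) ((t - 0) *\<^sub>R v) = t * DW (z + \<xi> *\<^sub>R v) v"
    using linear.scaleR[OF lin] by simp
  also have "\<dots> < 0" using neg[of \<xi>] \<xi> t by (simp add: mult_pos_neg)
  finally show ?thesis using eq by simp
qed

lemma local_struct:
  fixes W :: "'a::real_normed_vector \<Rightarrow> real"
  assumes dW: "\<And>x. (W has_derivative DW x) (at x)"
    and cDW: "continuous_on UNIV (\<lambda>x. DW x v)"
    and cW: "continuous_on UNIV W"
    and neg: "DW q v < 0" and Wq: "W q = c"
  shows "\<exists>\<epsilon>>0. \<exists>\<Omega>. connected \<Omega> \<and> (\<forall>z\<in>\<Omega>. W z < c) \<and> (\<forall>z\<in>ball q \<epsilon>. W z < c \<longrightarrow> z \<in> \<Omega>)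
           \<and> (\<forall>z\<in>ball q \<epsilon>. W z \<le> c \<longrightarrow> z \<in> closure \<Omega>)"
proof -
  obtain r where r: "r > 0" and rneg: "\<And>z. dist z q < r \<Longrightarrow> DW z v < 0"
  proof -
    from cDW have "continuous (at q) (\<lambda>x. DW x v)" by (simp add: continuous_on_eq_continuous_at)
    moreover have "- DW q v > 0" using neg by simp
    ultimately obtain d where d: "d > 0" "\<And>z. dist z q < d \<Longrightarrow> dist (DW z v) (DW q v) < - DW q v"
      unfolding continuous_at_eps_delta by blast
    have "DW z v < 0" if "dist z q < d" for z
    proof -
      have "\<bar>DW z v - DW q v\<bar> < - DW q v" using d(2)[OF that] by (simp add: dist_real_def)
      then show ?thesis by (simp add: abs_less_iff)
    qed
    then show ?thesis using that d(1) by blast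
  qed
  have v0: "v \<noteq> 0"
  proof
    assume "v = 0"
    have "linear (DW q)" using dW by (rule has_derivative_linear)
    then have "DW q 0 = 0" by (rule linear_0)
    then show False using neg \<open>v = 0\<close> by simp
  qed
  then have nv: "norm v > 0" by simp
  define \<tau> where "\<tau> = r / (4 * norm v)"
  have tau0: "\<tau> > 0" using r nv by (simp add: \<tau>_def)
  have tauv: "\<tau> * norm v = r / 4" using nv by (simp add: \<tau>_def)
  have decr: "W (z + t *\<^sub>R v) < W z" if "dist z q < r / 2" "0 < t" "t \<le> \<tau>" for z t
  proof (rule line_decr[OF dW _ \<open>0 < t\<close>])
    fix s assume s: "s \<in> {0..t}"
    have "dist (z + s *\<^sub>R v) q = norm ((z - q) + s *\<^sub>R v)" by (simp add: dist_norm algebra_simps)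
    also have "\<dots> \<le> norm (z - q) + norm (s *\<^sub>R v)" by (rule norm_triangle_ineq)
    also have "\<dots> = dist z q + s * norm v" using s by (simp add: dist_norm)
    finally have "dist (z + s *\<^sub>R v) q \<le> dist z q + s * norm v" .
    also have "s * norm v \<le> \<tau> * norm v" using s that by (intro mult_right_mono) auto
    then have "dist z q + s * norm v < r / 2 + r / 4" using that tauv by linarith
    finally show "DW (z + s *\<^sub>R v) v < 0" by (intro rneg) (use r in linarith)
  qed
  define p where "p = q + \<tau> *\<^sub>R v"
  have Wp: "W p < c" unfolding p_def using decr[of q \<tau>] r tau0 Wq by simp
  obtain e1 where e1: "e1 > 0" and e1b: "\<And>z. dist z p < e1 \<Longrightarrow> W z < c"
  proof -
    from cW have "continuous (at p) W" by (simp add: continuous_on_eq_continuous_at)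
    moreover have "c - W p > 0" using Wp by simp
    ultimately obtain d where d: "d > 0" "\<And>z. dist z p < d \<Longrightarrow> dist (W z) (W p) < c - W p"
      unfolding continuous_at_eps_delta by blast
    have "W z < c" if "dist z p < d" for z
    proof -
      have "\<bar>W z - W p\<bar> < c - W p" using d(2)[OF that] by (simp add: dist_real_def)
      then show ?thesis by (simp add: abs_less_iff)
    qed
    then show ?thesis using that d(1) by blast
  qed
  define \<epsilon> where "\<epsilon> = min e1 (r / 4)"
  have eps0: "\<epsilon> > 0" using e1 r by (simp add: \<epsilon>_def)
  define Z where "Z = {z \<in> ball q \<epsilon>. W z \<le> c}"
  define I where "I z = (if W z < c then {0..\<tau>} else {0<..\<tau>})" for z
  define seg where "seg z = (\<lambda>t. z + t *\<^sub>R v) ` I z" for z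
  define C where "C z = ball p \<epsilon> \<union> seg z" for z
  define \<Omega> where "\<Omega> = \<Union>(C ` Z)"
  have tauI: "\<tau> \<in> I z" for z using tau0 by (simp add: I_def)
  have Zd: "dist z q < \<epsilon>" if "z \<in> Z" for z using that by (simp add: Z_def dist_commute)
  have pC: "p \<in> C z" for z by (simp add: C_def eps0)
  have Ccon: "connected (C z)" if "z \<in> Z" for z
  proof -
    have "connected (seg z)" unfolding seg_def
      by (intro connected_continuous_image continuous_intros) (auto simp: I_def is_interval_connected_1)
    moreover have "z + \<tau> *\<^sub>R v \<in> ball p \<epsilon> \<inter> seg z"
      using Zd[OF that] tauI[of z] by (auto simp: seg_def p_def dist_norm norm_minus_commute)
    ultimately show ?thesis unfolding C_def
      by (intro connected_Un) auto
  qed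
  have con: "connected \<Omega>"
  proof -
    have "q \<in> Z" using Wq eps0 by (simp add: Z_def)
    then show ?thesis unfolding \<Omega>_def
      by (intro connected_Union) (auto intro: Ccon pC)
  qed
  have Wlt: "W w < c" if "w \<in> \<Omega>" for w
  proof -
    from that obtain z where z: "z \<in> Z" and w: "w \<in> C z" by (auto simp: \<Omega>_def)
    show ?thesis
    proof (cases "w \<in> ball p \<epsilon>")
      case True then show ?thesis using e1b by (simp add: \<epsilon>_def dist_commute)
    next
      case False
      then obtain t where t: "t \<in> I z" and wt: "w = z + t *\<^sub>R v" using w by (auto simp: C_def seg_def)
      have zq: "dist z q < r / 2" using Zd[OF z] r by (simp add: \<epsilon>_def)
      show ?thesis
      proof (cases "t = 0")
        case True then show ?thesis using t wt by (auto simp: I_def split: if_splits)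
      next
        case False
        then have "0 < t" "t \<le> \<tau>" using t by (auto simp: I_def split: if_splits)
        then have "W w < W z" using decr[OF zq] wt by simp
        then show ?thesis using z by (simp add: Z_def)
      qed
    qed
  qed
  show ?thesis
  proof (intro exI[of _ \<epsilon>] exI[of _ \<Omega>] conjI ballI impI eps0 con)
    fix w assume "w \<in> \<Omega>" then show "W w < c" by (rule Wlt)
  next
    fix z assume z: "z \<in> ball q \<epsilon>" "W z < c"
    then have "z \<in> Z" by (simp add: Z_def)
    moreover have "z \<in> C z" using z tau0 by (auto simp: C_def seg_def I_def image_iff intro!: bexI[of _ 0])
    ultimately show "z \<in> \<Omega>" by (auto simp: \<Omega>_def)
  next
    fix z assume z: "z \<in> ball q \<epsilon>" "W z \<le> c"
    then have zZ: "z \<in> Z" by (simp add: Z_def)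
    show "z \<in> closure \<Omega>" unfolding closure_approachable
    proof (intro allI impI)
      fix e :: real assume e: "e > 0"
      define t where "t = min \<tau> (e / (2 * norm v))"
      have t0: "t > 0" using tau0 e nv by (simp add: t_def)
      have "t \<in> I z" using t0 by (auto simp: I_def t_def)
      then have "z + t *\<^sub>R v \<in> C z" by (auto simp: C_def seg_def)
      then have "z + t *\<^sub>R v \<in> \<Omega>" using zZ by (auto simp: \<Omega>_def)
      moreover have "dist (z + t *\<^sub>R v) z < e"
      proof -
        have "dist (z + t *\<^sub>R v) z = t * norm v" using t0 by (simp add: dist_norm)
        also have "\<dots> \<le> e / (2 * norm v) * norm v" by (intro mult_right_mono) (auto simp: t_def)
        also have "\<dots> = e / 2" using nv by simp
        finally show ?thesis using e by simp
      qed
      ultimately show "\<exists>y\<in>\<Omega>. dist y z < e" by blast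
    qed
  qed
qed

definition dpoly :: "(('n::finite \<Rightarrow> nat) \<Rightarrow> real) \<Rightarrow> nat \<Rightarrow> real^'n \<Rightarrow> real^'n \<Rightarrow> real" where
  "dpoly c p x v = (\<Sum>\<alpha>\<in>{\<alpha>. 2 \<le> mdeg \<alpha> \<and> mdeg \<alpha> \<le> p}. c \<alpha> *
      (\<Sum>i\<in>UNIV. (of_nat (\<alpha> i) * v$i * (x$i)^(\<alpha> i - 1)) * (\<Prod>j\<in>UNIV - {i}. (x$j)^(\<alpha> j))))"

lemma taylor_eq: "taylor_poly c p x = (\<Sum>\<alpha>\<in>{\<alpha>. 2 \<le> mdeg \<alpha> \<and> mdeg \<alpha> \<le> p}. c \<alpha> * (\<Prod>i\<in>UNIV. (x$i)^(\<alpha> i)))"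
  by (simp add: taylor_poly_def mono_at_def)

lemma taylor_deriv: "(taylor_poly c p has_derivative dpoly c p x) (at x)"
proof -
  have d1: "((\<lambda>x. x$i) has_derivative (\<lambda>v. v$i)) (at x)" for i :: 'a
    by (rule bounded_linear_imp_has_derivative[OF bounded_linear_vec_nth])
  have d2: "((\<lambda>x. (x$i)^k) has_derivative (\<lambda>v. of_nat k * v$i * (x$i)^(k-1))) (at x)" for i k
    by (rule has_derivative_power[OF d1])
  have d3: "((\<lambda>x. \<Prod>i\<in>UNIV. (x$i)^(\<alpha> i)) has_derivative
      (\<lambda>v. \<Sum>i\<in>UNIV. (of_nat (\<alpha> i) * v$i * (x$i)^(\<alpha> i - 1)) * (\<Prod>j\<in>UNIV - {i}. (x$j)^(\<alpha> j)))) (at x)" for \<alpha>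
    by (rule has_derivative_prod) (rule d2)
  have d4: "((\<lambda>x. c \<alpha> * (\<Prod>i\<in>UNIV. (x$i)^(\<alpha> i))) has_derivative
      (\<lambda>v. c \<alpha> * (\<Sum>i\<in>UNIV. (of_nat (\<alpha> i) * v$i * (x$i)^(\<alpha> i - 1)) * (\<Prod>j\<in>UNIV - {i}. (x$j)^(\<alpha> j))))) (at x)" for \<alpha>
    using has_derivative_mult[OF has_derivative_const d3[of \<alpha>], of "c \<alpha>"] by simp
  have "((\<lambda>x. \<Sum>\<alpha>\<in>{\<alpha>. 2 \<le> mdeg \<alpha> \<and> mdeg \<alpha> \<le> p}. c \<alpha> * (\<Prod>i\<in>UNIV. (x$i)^(\<alpha> i))) has_derivative dpoly c p x) (at x)"
    unfolding dpoly_def[abs_def] by (rule has_derivative_sum) (rule d4)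
  then show ?thesis by (simp add: taylor_eq[abs_def])
qed

lemma dpoly_cont:
  assumes "continuous_on UNIV g"
  shows "continuous_on UNIV (\<lambda>x. dpoly c p x (g x))"
  unfolding dpoly_def using assms by (intro continuous_intros)

lemma taylor_cont: "continuous_on UNIV (taylor_poly c p)"
  unfolding taylor_eq[abs_def] by (intro continuous_intros)

lemma taylor0: "taylor_poly c p 0 = 0"
proof -
  have "(\<Prod>i\<in>UNIV. (0::real)^(\<alpha> i)) = 0" if "2 \<le> mdeg \<alpha>" for \<alpha> :: "'a \<Rightarrow> nat"
  proof -
    from that obtain i where "\<alpha> i \<noteq> 0" unfolding mdeg_def by (metis not_numeral_le_zero sum.neutral)
    then show ?thesis by (intro prod_zero) auto
  qed
  then show ?thesis unfolding taylor_eq by (intro sum.neutral) auto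
qed

lemma dpoly_zero: "dpoly c p x 0 = 0"
  by (simp add: dpoly_def)

lemma adm_D:
  assumes "admissible W f c S"
  shows "closed S" "connected S" "0 \<in> interior S" "\<And>x. x \<in> interior S \<Longrightarrow> W x < c"
    "\<And>x. x \<in> frontier S \<Longrightarrow> W x = c" "compact S" "S \<subseteq> max_domain W f"
  using assms unfolding admissible_def by blast+

lemma G_prop:
  assumes "x \<in> max_domain (taylor_poly c p) f" "x \<noteq> 0"
  shows "taylor_poly c p x > 0 \<and> dpoly c p x (f x) < 0"
proof -
  have fd: "frechet_derivative (taylor_poly c p) (at x) = dpoly c p x"
    by (rule sym[OF frechet_derivative_at[OF taylor_deriv]])
  from assms(1) obtain U where U: "open U" "connected U" "0 \<in> U"
    "\<forall>x\<in>U - {0}. taylor_poly c p x > 0 \<and> frechet_derivative (taylor_poly c p) (at x) (f x) < 0" "x \<in> U"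
    unfolding max_domain_def by blast
  then show ?thesis using fd assms(2) by force
qed

lemma G_nonneg:
  assumes "x \<in> max_domain (taylor_poly c p) f"
  shows "taylor_poly c p x \<ge> 0"
  using G_prop[OF assms] taylor0[of c p] by (cases "x = 0") auto

lemma G_dneg:
  assumes "x \<in> max_domain (taylor_poly c p) f" "f 0 = 0"
  shows "dpoly c p x (f x) \<le> 0"
  using G_prop[OF assms(1)] assms(2) by (cases "x = 0") (auto simp: dpoly_zero)

lemma adm_le:
  assumes "admissible W f c S" "x \<in> S"
  shows "W x \<le> c"
proof -
  have "closed S" using adm_D[OF assms(1)] by blast
  then have "x \<in> interior S \<or> x \<in> frontier S" using assms(2)
    by (auto simp: frontier_def closure_closed)
  then show ?thesis using adm_D(4,5)[OF assms(1)] by force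
qed

lemma adm_int:
  assumes "admissible W f c S" "x \<in> S" "W x < c"
  shows "x \<in> interior S"
proof -
  have "closed S" using adm_D[OF assms(1)] by blast
  then have "x \<in> interior S \<or> x \<in> frontier S" using assms(2)
    by (auto simp: frontier_def closure_closed)
  then show ?thesis using adm_D(5)[OF assms(1)] assms(3) by force
qed

lemma adm_frontier:
  assumes "admissible (taylor_poly c p) f cc S" "q \<in> frontier S"
  shows "taylor_poly c p q = cc" "q \<in> S" "q \<noteq> 0" "dpoly c p q (f q) < 0"
proof -
  show "taylor_poly c p q = cc" using adm_D(5)[OF assms(1)] assms(2) by blast
  have cl: "closed S" using adm_D(1)[OF assms(1)] .
  show qS: "q \<in> S" using assms(2) cl by (auto simp: frontier_def closure_closed)
  show "q \<noteq> 0" using assms(2) adm_D(3)[OF assms(1)] by (auto simp: frontier_def)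
  moreover have "q \<in> max_domain (taylor_poly c p) f" using adm_D(7)[OF assms(1)] qS by blast
  ultimately show "dpoly c p q (f q) < 0" using G_prop[of q c p f] by blast
qed

lemma omega_in:
  assumes "admissible W f c S" "connected \<Omega>" "\<forall>z\<in>\<Omega>. W z < c" "\<Omega> \<inter> interior S \<noteq> {}"
  shows "\<Omega> \<subseteq> interior S"
proof -
  have "\<Omega> \<inter> frontier S = {}" using adm_D(5)[OF assms(1)] assms(3) by force
  moreover have "\<Omega> \<inter> S \<noteq> {}" using assms(4) interior_subset by blast
  ultimately have "\<Omega> \<subseteq> S" using connected_Int_frontier[OF assms(2)] by blast
  then show ?thesis using adm_int[OF assms(1)] assms(3) by blast
qed

lemma conn_local:
  fixes S T :: "'a::metric_space set"
  assumes "connected S" "a \<in> S" "a \<in> T" "closed T"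
    and loc: "\<And>x. x \<in> S \<Longrightarrow> x \<in> T \<Longrightarrow> \<exists>\<epsilon>>0. \<forall>y\<in>S. dist y x < \<epsilon> \<longrightarrow> y \<in> T"
  shows "S \<subseteq> T"
proof -
  define e where "e x = (SOME e. e > 0 \<and> (\<forall>y\<in>S. dist y x < e \<longrightarrow> y \<in> T))" for x
  have e: "e x > 0 \<and> (\<forall>y\<in>S. dist y x < e x \<longrightarrow> y \<in> T)" if "x \<in> S \<inter> T" for x
    unfolding e_def by (rule someI_ex) (use loc that in blast)
  define U where "U = (\<Union>x\<in>S \<inter> T. ball x (e x))"
  have oU: "open U" unfolding U_def by (intro open_UN ballI open_ball)
  have oV: "open (- T)" using assms(4) by (simp add: open_Compl)
  have dis: "U \<inter> - T \<inter> S = {}"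
  proof (intro equalityI subsetI)
    fix y assume "y \<in> U \<inter> - T \<inter> S"
    then obtain x where x: "x \<in> S \<inter> T" "dist x y < e x" and y: "y \<notin> T" "y \<in> S" by (auto simp: U_def)
    then show "y \<in> {}" using e[OF x(1)] by (simp add: dist_commute)
  qed simp
  have cov: "S \<subseteq> U \<union> - T"
  proof
    fix y assume y: "y \<in> S"
    show "y \<in> U \<union> - T"
    proof (cases "y \<in> T")
      case True
      then have "y \<in> ball y (e y)" using e[of y] y by simp
      then show ?thesis using True y unfolding U_def by blast
    qed simp
  qed
  have ne: "U \<inter> S \<noteq> {}"
  proof -
    have "a \<in> ball a (e a)" using e[of a] assms(2,3) by simp
    then show ?thesis using assms(2,3) unfolding U_def by blast
  qed
  have "U \<inter> S = {} \<or> - T \<inter> S = {}" by (rule connectedD[OF assms(1) oU oV dis cov])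
  then have "- T \<inter> S = {}" using ne by blast
  then show ?thesis by blast
qed

lemma local_struct_W:
  assumes "taylor_poly c p q = cc" "dpoly c p q v < 0"
  shows "\<exists>\<epsilon>>0. \<exists>\<Omega>. connected \<Omega> \<and> (\<forall>z\<in>\<Omega>. taylor_poly c p z < cc)
      \<and> (\<forall>z\<in>ball q \<epsilon>. taylor_poly c p z < cc \<longrightarrow> z \<in> \<Omega>)
      \<and> (\<forall>z\<in>ball q \<epsilon>. taylor_poly c p z \<le> cc \<longrightarrow> z \<in> closure \<Omega>)"
  by (rule local_struct[OF taylor_deriv dpoly_cont[OF continuous_on_const] taylor_cont assms(2) assms(1)])

lemma adm_closure:
  assumes adm: "admissible (taylor_poly c p) f cc S"
  shows "S \<subseteq> closure (interior S)"
proof (rule conn_local)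
  show "connected S" using adm_D(2)[OF adm] .
  show "0 \<in> S" "0 \<in> closure (interior S)" using adm_D(3)[OF adm] interior_subset closure_subset
    by auto
  show "closed (closure (interior S))" by simp
  fix x assume xS: "x \<in> S" and xc: "x \<in> closure (interior S)"
  show "\<exists>\<epsilon>>0. \<forall>y\<in>S. dist y x < \<epsilon> \<longrightarrow> y \<in> closure (interior S)"
  proof (cases "x \<in> interior S")
    case True
    then obtain \<epsilon> where "\<epsilon> > 0" "ball x \<epsilon> \<subseteq> interior S"
      using open_contains_ball open_interior by blast
    then show ?thesis using closure_subset by (force simp: dist_commute)
  next
    case False
    then have xf: "x \<in> frontier S" using xS adm_D(1)[OF adm] by (auto simp: frontier_def closure_closed)
    obtain \<epsilon> \<Omega> where \<epsilon>: "\<epsilon> > 0" and con: "connected \<Omega>" and lt: "\<forall>z\<in>\<Omega>. taylor_poly c p z < cc"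
      and inO: "\<forall>z\<in>ball x \<epsilon>. taylor_poly c p z < cc \<longrightarrow> z \<in> \<Omega>"
      and clO: "\<forall>z\<in>ball x \<epsilon>. taylor_poly c p z \<le> cc \<longrightarrow> z \<in> closure \<Omega>"
      using local_struct_W[OF adm_frontier(1,4)[OF adm xf]] by blast
    obtain y where y: "y \<in> interior S" "dist y x < \<epsilon>"
      using xc \<epsilon> unfolding closure_approachable by blast
    have "taylor_poly c p y < cc" using y(1) adm_D(4)[OF adm] by blast
    then have "y \<in> \<Omega>" using inO y(2) by (simp add: dist_commute)
    then have "\<Omega> \<subseteq> interior S" using omega_in[OF adm con lt] y(1) by blast
    then have "closure \<Omega> \<subseteq> closure (interior S)" by (rule closure_mono)
    moreover have "\<forall>z\<in>S. dist z x < \<epsilon> \<longrightarrow> z \<in> closure \<Omega>"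
      using clO adm_le[OF adm] by (auto simp: dist_commute)
    ultimately show ?thesis using \<epsilon> by blast
  qed
qed

lemma adm_loc:
  assumes adm: "admissible (taylor_poly c p) f cc S" and qS: "q \<in> S"
  shows "\<exists>\<epsilon>>0. \<forall>z\<in>ball q \<epsilon>. taylor_poly c p z < cc \<longrightarrow> z \<in> interior S"
proof (cases "q \<in> interior S")
  case True
  then obtain \<epsilon> where "\<epsilon> > 0" "ball q \<epsilon> \<subseteq> interior S"
    using open_contains_ball open_interior by blast
  then show ?thesis by blast
next
  case False
  then have qf: "q \<in> frontier S" using qS adm_D(1)[OF adm] by (auto simp: frontier_def closure_closed)
  obtain \<epsilon> \<Omega> where \<epsilon>: "\<epsilon> > 0" and con: "connected \<Omega>" and lt: "\<forall>z\<in>\<Omega>. taylor_poly c p z < cc"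
    and inO: "\<forall>z\<in>ball q \<epsilon>. taylor_poly c p z < cc \<longrightarrow> z \<in> \<Omega>"
    using local_struct_W[OF adm_frontier(1,4)[OF adm qf]] by blast
  have "q \<in> closure (interior S)" using adm_closure[OF adm] qS by blast
  then obtain y where y: "y \<in> interior S" "dist y q < \<epsilon>"
    using \<epsilon> unfolding closure_approachable by blast
  have "taylor_poly c p y < cc" using y(1) adm_D(4)[OF adm] by blast
  then have "y \<in> \<Omega>" using inO y(2) by (simp add: dist_commute)
  then have "\<Omega> \<subseteq> interior S" using omega_in[OF adm con lt] y(1) by blast
  then show ?thesis using inO \<epsilon> by blast
qed

lemma adm_subset:
  assumes adm1: "admissible (taylor_poly c p) f c1 S1"
    and adm2: "admissible (taylor_poly c p) f c2 S2" and le: "c1 \<le> c2"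
  shows "S1 \<subseteq> S2"
proof (rule conn_local)
  show "connected S1" using adm_D(2)[OF adm1] .
  show "0 \<in> S1" "0 \<in> S2" using adm_D(3)[OF adm1] adm_D(3)[OF adm2] interior_subset by auto
  show "closed S2" using adm_D(1)[OF adm2] .
  fix x assume xS1: "x \<in> S1" and xS2: "x \<in> S2"
  show "\<exists>\<epsilon>>0. \<forall>y\<in>S1. dist y x < \<epsilon> \<longrightarrow> y \<in> S2"
  proof (cases "x \<in> interior S2")
    case True
    then obtain \<epsilon> where "\<epsilon> > 0" "ball x \<epsilon> \<subseteq> interior S2"
      using open_contains_ball open_interior by blast
    then show ?thesis using interior_subset by (force simp: dist_commute)
  next
    case False
    then have xf: "x \<in> frontier S2" using xS2 adm_D(1)[OF adm2] by (auto simp: frontier_def closure_closed)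
    have Wx: "taylor_poly c p x = c2" using adm_frontier(1)[OF adm2 xf] .
    have "taylor_poly c p x \<le> c1" using adm_le[OF adm1 xS1] .
    then have c12: "c1 = c2" using Wx le by simp
    obtain \<epsilon> \<Omega> where \<epsilon>: "\<epsilon> > 0" and con: "connected \<Omega>" and lt: "\<forall>z\<in>\<Omega>. taylor_poly c p z < c2"
      and inO: "\<forall>z\<in>ball x \<epsilon>. taylor_poly c p z < c2 \<longrightarrow> z \<in> \<Omega>"
      and clO: "\<forall>z\<in>ball x \<epsilon>. taylor_poly c p z \<le> c2 \<longrightarrow> z \<in> closure \<Omega>"
      using local_struct_W[OF adm_frontier(1,4)[OF adm2 xf]] by blast
    have "x \<in> closure (interior S2)" using adm_closure[OF adm2] xS2 by blast
    then obtain y where y: "y \<in> interior S2" "dist y x < \<epsilon>"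
      using \<epsilon> unfolding closure_approachable by blast
    have "taylor_poly c p y < c2" using y(1) adm_D(4)[OF adm2] by blast
    then have "y \<in> \<Omega>" using inO y(2) by (simp add: dist_commute)
    then have "\<Omega> \<subseteq> interior S2" using omega_in[OF adm2 con lt] y(1) by blast
    then have "closure \<Omega> \<subseteq> S2"
      using closure_mono[of \<Omega> S2] interior_subset adm_D(1)[OF adm2] by (auto simp: closure_closed)
    moreover have "\<forall>z\<in>S1. dist z x < \<epsilon> \<longrightarrow> z \<in> closure \<Omega>"
      using clO adm_le[OF adm1] c12 by (auto simp: dist_commute)
    ultimately show ?thesis using \<epsilon> by blast
  qed
qed

lemma f_loc_lip:
  fixes f :: "real^'n \<Rightarrow> real^'n"
  assumes "real_analytic_vf f"
  shows "\<exists>\<delta>>0. \<exists>L. \<forall>x\<in>ball a \<delta>. \<forall>y\<in>ball a \<delta>. norm (f x - f y) \<le> L * norm (x - y)"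
proof -
  define P where "P k dl \<longleftrightarrow> fst dl > 0 \<and> (\<forall>x\<in>ball a (fst dl). \<forall>y\<in>ball a (fst dl).
      \<bar>f x $ k - f y $ k\<bar> \<le> snd dl * norm (x - y))" for k and dl :: "real \<times> real"
  have ex: "\<exists>dl. P k dl" for k
  proof -
    have "real_analytic_on (\<lambda>x. f x $ k) UNIV" using assms by (simp add: real_analytic_vf_def)
    from analytic_loc_lip[OF this, of a] obtain \<delta> L where "\<delta> > 0"
      "\<forall>x\<in>ball a \<delta>. \<forall>y\<in>ball a \<delta>. \<bar>f x $ k - f y $ k\<bar> \<le> L * norm (x - y)" by blast
    then have "P k (\<delta>, L)" by (simp add: P_def)
    then show ?thesis by blast
  qed
  define dl where "dl k = (SOME dl. P k dl)" for k
  have Pk: "P k (dl k)" for k unfolding dl_def by (rule someI_ex[OF ex])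
  define \<delta> where "\<delta> = Min (range (\<lambda>k. fst (dl k)))"
  have d0: "\<delta> > 0" unfolding \<delta>_def using Pk by (auto simp: P_def)
  have dle: "\<delta> \<le> fst (dl k)" for k unfolding \<delta>_def by (rule Min_le) auto
  define L where "L = (\<Sum>k\<in>UNIV. \<bar>snd (dl k)\<bar>)"
  have "\<forall>x\<in>ball a \<delta>. \<forall>y\<in>ball a \<delta>. norm (f x - f y) \<le> L * norm (x - y)"
  proof (intro ballI)
    fix x y assume x: "x \<in> ball a \<delta>" and y: "y \<in> ball a \<delta>"
    have "norm (f x - f y) \<le> (\<Sum>k\<in>UNIV. \<bar>(f x - f y) $ k\<bar>)" by (rule norm_le_l1_cart)
    also have "\<dots> \<le> (\<Sum>k\<in>UNIV. \<bar>snd (dl k)\<bar> * norm (x - y))"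
    proof (rule sum_mono)
      fix k
      have "x \<in> ball a (fst (dl k))" "y \<in> ball a (fst (dl k))" using x y dle[of k] by auto
      then have "\<bar>f x $ k - f y $ k\<bar> \<le> snd (dl k) * norm (x - y)" using Pk[of k] by (auto simp: P_def)
      also have "\<dots> \<le> \<bar>snd (dl k)\<bar> * norm (x - y)" by (intro mult_right_mono) auto
      finally show "\<bar>(f x - f y) $ k\<bar> \<le> \<bar>snd (dl k)\<bar> * norm (x - y)" by simp
    qed
    also have "\<dots> = L * norm (x - y)" by (simp add: L_def sum_distrib_right)
    finally show "norm (f x - f y) \<le> L * norm (x - y)" .
  qed
  then show ?thesis using d0 by blast
qed

lemma loc_lip_nonneg:
  assumes "\<And>a. \<exists>\<delta>>0. \<exists>L. \<forall>x\<in>ball a \<delta>. \<forall>y\<in>ball a \<delta>. norm (f x - f y) \<le> L * norm (x - y)"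
  shows "\<exists>\<delta>>0. \<exists>L\<ge>0. \<forall>x\<in>ball a \<delta>. \<forall>y\<in>ball a \<delta>. norm (f x - f y) \<le> L * norm (x - y)"
proof -
  obtain \<delta> L where "\<delta> > 0" and H: "\<forall>x\<in>ball a \<delta>. \<forall>y\<in>ball a \<delta>. norm (f x - f y) \<le> L * norm (x - y)"
    using assms by blast
  have "\<forall>x\<in>ball a \<delta>. \<forall>y\<in>ball a \<delta>. norm (f x - f y) \<le> \<bar>L\<bar> * norm (x - y)"
  proof (intro ballI)
    fix x y assume "x \<in> ball a \<delta>" "y \<in> ball a \<delta>"
    then have "norm (f x - f y) \<le> L * norm (x - y)" using H by blast
    also have "\<dots> \<le> \<bar>L\<bar> * norm (x - y)" by (intro mult_right_mono) auto
    finally show "norm (f x - f y) \<le> \<bar>L\<bar> * norm (x - y)" .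
  qed
  then show ?thesis using \<open>\<delta> > 0\<close> by (intro exI[of _ \<delta>] conjI exI[of _ "\<bar>L\<bar>"]) auto
qed

lemma loc_lip_cont:
  fixes f :: "'a::real_normed_vector \<Rightarrow> 'b::real_normed_vector"
  assumes "\<And>a. \<exists>\<delta>>0. \<exists>L. \<forall>x\<in>ball a \<delta>. \<forall>y\<in>ball a \<delta>. norm (f x - f y) \<le> L * norm (x - y)"
  shows "continuous_on UNIV f"
  unfolding continuous_on_iff
proof (intro ballI allI impI)
  fix a and e :: real assume e: "e > 0"
  obtain \<delta> L where d: "\<delta> > 0" "L \<ge> 0" and H: "\<forall>x\<in>ball a \<delta>. \<forall>y\<in>ball a \<delta>. norm (f x - f y) \<le> L * norm (x - y)"
    using loc_lip_nonneg[OF assms] by blast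
  show "\<exists>d>0. \<forall>x'\<in>UNIV. dist x' a < d \<longrightarrow> dist (f x') (f a) < e"
  proof (intro exI[of _ "min \<delta> (e / (L + 1))"] conjI ballI impI)
    show "min \<delta> (e / (L + 1)) > 0" using d e by simp
    fix x assume x: "dist x a < min \<delta> (e / (L + 1))"
    have "x \<in> ball a \<delta>" "a \<in> ball a \<delta>" using x d by (auto simp: dist_commute)
    then have "norm (f x - f a) \<le> L * norm (x - a)" using H by blast
    also have "\<dots> \<le> (L + 1) * norm (x - a)" by (intro mult_right_mono) auto
    also have "\<dots> < (L + 1) * (e / (L + 1))"
      using x d by (intro mult_strict_left_mono) (auto simp: dist_norm)
    also have "\<dots> = e" using d by simp
    finally show "dist (f x) (f a) < e" by (simp add: dist_norm)
  qed
qed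

lemma lip_compact:
  fixes f :: "'a::real_normed_vector \<Rightarrow> 'b::real_normed_vector"
  assumes loc: "\<And>a. \<exists>\<delta>>0. \<exists>L. \<forall>x\<in>ball a \<delta>. \<forall>y\<in>ball a \<delta>. norm (f x - f y) \<le> L * norm (x - y)"
    and K: "compact K"
  shows "\<exists>L. \<forall>x\<in>K. \<forall>y\<in>K. norm (f x - f y) \<le> L * norm (x - y)"
proof (cases "K = {}")
  case True then show ?thesis by simp
next
  case Kne: False
  define P where "P a dl \<longleftrightarrow> fst dl > 0 \<and> snd dl \<ge> 0 \<and> (\<forall>x\<in>ball a (fst dl). \<forall>y\<in>ball a (fst dl).
      norm (f x - f y) \<le> snd dl * norm (x - y))" for a and dl :: "real \<times> real"
  have ex: "\<exists>dl. P a dl" for a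
  proof -
    obtain \<delta> L where "\<delta> > 0" "L \<ge> 0" "\<forall>x\<in>ball a \<delta>. \<forall>y\<in>ball a \<delta>. norm (f x - f y) \<le> L * norm (x - y)"
      using loc_lip_nonneg[OF loc] by blast
    then have "P a (\<delta>, L)" by (simp add: P_def)
    then show ?thesis by blast
  qed
  define dl where "dl a = (SOME dl. P a dl)" for a
  have Pa: "P a (dl a)" for a unfolding dl_def by (rule someI_ex[OF ex])
  define \<delta> where "\<delta> a = fst (dl a)" for a
  define La where "La a = snd (dl a)" for a
  have d0: "\<delta> a > 0" and L0: "La a \<ge> 0"
    and H: "\<And>x y. x \<in> ball a (\<delta> a) \<Longrightarrow> y \<in> ball a (\<delta> a) \<Longrightarrow> norm (f x - f y) \<le> La a * norm (x - y)" for a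
    using Pa[of a] by (auto simp: P_def \<delta>_def La_def)
  obtain T where T: "T \<subseteq> K" "finite T" "K \<subseteq> (\<Union>a\<in>T. ball a (\<delta> a / 2))"
  proof -
    have "K \<subseteq> (\<Union>a\<in>K. ball a (\<delta> a / 2))" using d0 by force
    from compactE_image[OF K _ this] that show ?thesis by auto
  qed
  have Tne: "T \<noteq> {}" using T(3) Kne by blast
  have fc: "continuous_on UNIV f" by (rule loc_lip_cont[OF loc])
  have "compact (f ` K)" by (rule compact_continuous_image[OF continuous_on_subset[OF fc] K]) simp
  then obtain B where B: "\<And>x. x \<in> K \<Longrightarrow> norm (f x) \<le> B"
    using compact_imp_bounded bounded_iff by (metis imageI)
  have B0: "B \<ge> 0" using B Kne norm_ge_zero order_trans by blast
  define dm where "dm = Min ((\<lambda>a. \<delta> a / 2) ` T)"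
  have dm0: "dm > 0" unfolding dm_def using T(2) Tne d0 by (subst Min_gr_iff) auto
  have dmle: "dm \<le> \<delta> a / 2" if "a \<in> T" for a unfolding dm_def using T(2) that by (intro Min_le) auto
  define Lm where "Lm = Max (La ` T)"
  have Lmge: "La a \<le> Lm" if "a \<in> T" for a unfolding Lm_def using T(2) that by (intro Max_ge) auto
  have Lm0: "Lm \<ge> 0" using Lmge L0 Tne by (meson all_not_in_conv order_trans)
  define Ls where "Ls = Lm + 2 * B / dm"
  have "\<forall>x\<in>K. \<forall>y\<in>K. norm (f x - f y) \<le> Ls * norm (x - y)"
  proof (intro ballI)
    fix x y assume x: "x \<in> K" and y: "y \<in> K"
    obtain a where a: "a \<in> T" "dist a x < \<delta> a / 2" using T(3) x by auto
    show "norm (f x - f y) \<le> Ls * norm (x - y)"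
    proof (cases "norm (x - y) < dm")
      case True
      have "dist a y \<le> dist a x + dist x y" by (rule dist_triangle)
      also have "\<dots> < \<delta> a" using a dmle[OF a(1)] True by (simp add: dist_norm)
      finally have yb: "y \<in> ball a (\<delta> a)" by simp
      have xb: "x \<in> ball a (\<delta> a)" using a d0[of a] by simp
      have "norm (f x - f y) \<le> La a * norm (x - y)" by (rule H[OF xb yb])
      also have "\<dots> \<le> Ls * norm (x - y)"
      proof (rule mult_right_mono)
        have "2 * B / dm \<ge> 0" using B0 dm0 by simp
        then show "La a \<le> Ls" unfolding Ls_def using Lmge[OF a(1)] by linarith
      qed simp
      finally show ?thesis .
    next
      case False
      have "norm (f x - f y) \<le> norm (f x) + norm (f y)" by (rule norm_triangle_ineq4)
      also have "\<dots> \<le> 2 * B" using B[OF x] B[OF y] by simp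
      also have "\<dots> = (2 * B / dm) * dm" using dm0 by simp
      also have "\<dots> \<le> (2 * B / dm) * norm (x - y)" using False B0 dm0 by (intro mult_left_mono) auto
      also have "\<dots> \<le> Ls * norm (x - y)" unfolding Ls_def using Lm0 by (intro mult_right_mono) auto
      finally show ?thesis .
    qed
  qed
  then show ?thesis by blast
qed

lemma attraction:
  fixes f :: "real^'n \<Rightarrow> real^'n"
  assumes fa: "real_analytic_vf f" and f0: "f 0 = 0"
    and adm: "admissible (taylor_poly c p) f cc S" and x0: "x0 \<in> S"
  shows "x0 \<in> domain_of_attraction f"
proof -
  let ?W = "taylor_poly c p"
  have loc: "\<And>a. \<exists>\<delta>>0. \<exists>L. \<forall>x\<in>ball a \<delta>. \<forall>y\<in>ball a \<delta>. norm (f x - f y) \<le> L * norm (x - y)"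
    by (rule f_loc_lip[OF fa])
  have fc: "continuous_on UNIV f" by (rule loc_lip_cont[OF loc])
  have Scomp: "compact S" using adm_D(6)[OF adm] .
  have Sclosed: "closed S" using adm_D(1)[OF adm] .
  have SG: "S \<subseteq> max_domain ?W f" using adm_D(7)[OF adm] .
  obtain R where R: "S \<subseteq> cball 0 R"
  proof -
    obtain b where "b > 0" "\<forall>x\<in>S. norm x \<le> b" using compact_imp_bounded[OF Scomp] unfolding bounded_pos by blast
    then have "S \<subseteq> cball 0 b" by (auto simp: subset_eq)
    then show ?thesis by (rule that)
  qed
  define K where "K = cball (0::real^'n) R"
  have Kne: "K \<noteq> {}" using R x0 by (auto simp: K_def)
  have Kcl: "closed K" and Kcv: "convex K" by (auto simp: K_def)
  obtain L where L: "\<forall>x\<in>K. \<forall>y\<in>K. norm (f x - f y) \<le> L * norm (x - y)"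
    using lip_compact[OF loc compact_cball] unfolding K_def by blast
  define g where "g x = f (closest_point K x)" for x
  have glip: "norm (g x - g y) \<le> max L 0 * norm (x - y)" for x y
  proof -
    have inK: "closest_point K x \<in> K" "closest_point K y \<in> K"
      by (rule closest_point_in_set[OF Kcl Kne])+
    have "norm (g x - g y) \<le> L * norm (closest_point K x - closest_point K y)"
      unfolding g_def using bspec[OF bspec[OF L inK(1)] inK(2)] by simp
    also have "\<dots> \<le> max L 0 * norm (closest_point K x - closest_point K y)"
      by (intro mult_right_mono) auto
    also have "\<dots> \<le> max L 0 * norm (x - y)"
      using closest_point_lipschitz[OF Kcv Kcl Kne, of x y] by (intro mult_left_mono) (auto simp: dist_norm)
    finally show ?thesis .
  qed
  have gS: "g x = f x" if "x \<in> S" for x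
    using that R closest_point_self[of x K] by (auto simp: g_def K_def)
  obtain Phi where Phi0: "Phi 0 = x0"
    and Phider: "\<And>t. t \<ge> 0 \<Longrightarrow> (Phi has_vector_derivative g (Phi t)) (at t within {0..})"
    using picard_global[OF glip, of x0] by blast
  have cPhi: "continuous_on {0..} Phi"
    unfolding continuous_on_eq_continuous_within
  proof
    fix t :: real assume "t \<in> {0..}"
    then show "continuous (at t within {0..}) Phi"
      using has_vector_derivative_continuous[OF Phider[of t]] by simp
  qed
  have Wder: "((\<lambda>s. ?W (Phi s)) has_real_derivative dpoly c p (Phi t) (g (Phi t))) (at t within {0..})"
    if "t \<ge> 0" for t
  proof -
    have "((?W \<circ> Phi) has_vector_derivative dpoly c p (Phi t) (g (Phi t))) (at t within {0..})"
      by (rule vector_derivative_diff_chain_within[OF Phider[OF that] has_derivative_at_withinI[OF taylor_deriv]])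
    then show ?thesis by (simp add: has_real_derivative_iff_has_vector_derivative o_def)
  qed
  have inv: "Phi t \<in> S" if "t \<ge> 0" for t
  proof (rule ccontr)
    assume nt: "Phi t \<notin> S"
    define E where "E = {s. 0 \<le> s \<and> Phi s \<notin> S}"
    have tE: "t \<in> E" using that nt by (simp add: E_def)
    have bdd: "bdd_below E" unfolding bdd_below_def E_def by auto
    define t0 where "t0 = Inf E"
    have t0ge: "t0 \<ge> 0" unfolding t0_def by (rule cInf_greatest) (use tE in \<open>auto simp: E_def\<close>)
    have t0le: "t0 \<le> s" if "s \<in> E" for s unfolding t0_def by (rule cInf_lower[OF that bdd])
    have before: "Phi s \<in> S" if "0 \<le> s" "s < t0" for s
      using t0le[of s] that by (auto simp: E_def)
    have q: "Phi t0 \<in> S"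
    proof (cases "t0 = 0")
      case True then show ?thesis using Phi0 x0 by simp
    next
      case False
      then have t0p: "t0 > 0" using t0ge by simp
      have "Phi ` {0..<t0} \<subseteq> S" using before by auto
      moreover have "continuous_on (closure {0..<t0}) Phi"
        using cPhi t0p by (auto intro: continuous_on_subset)
      ultimately have "Phi ` closure {0..<t0} \<subseteq> S"
        using image_closure_subset[OF _ Sclosed] by blast
      then show ?thesis using t0p by auto
    qed
    have ct0: "continuous (at t0 within {0..}) Phi"
      using cPhi t0ge by (simp add: continuous_on_eq_continuous_within)
    obtain \<delta> where \<delta>: "\<delta> > 0" "\<And>s. t0 \<le> s \<Longrightarrow> s < t0 + \<delta> \<Longrightarrow> Phi s \<in> S"
    proof (cases "Phi t0 \<in> interior S")
      case True
      then obtain \<epsilon> where \<epsilon>: "\<epsilon> > 0" "ball (Phi t0) \<epsilon> \<subseteq> interior S"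
        using open_contains_ball open_interior by blast
      obtain d where d: "d > 0" "\<And>s. s \<in> {0..} \<Longrightarrow> dist s t0 < d \<Longrightarrow> dist (Phi s) (Phi t0) < \<epsilon>"
        using ct0 \<epsilon>(1) unfolding continuous_within_eps_delta by blast
      show ?thesis
      proof (rule that[OF d(1)])
        fix s assume s: "t0 \<le> s" "s < t0 + d"
        then have "dist (Phi s) (Phi t0) < \<epsilon>" using d(2)[of s] t0ge by (simp add: dist_real_def)
        then have "Phi s \<in> ball (Phi t0) \<epsilon>" by (simp add: dist_commute)
        then show "Phi s \<in> S" using \<epsilon>(2) interior_subset by blast
      qed
    next
      case False
      then have qf: "Phi t0 \<in> frontier S" using q Sclosed by (auto simp: frontier_def closure_closed)
      have Wq: "?W (Phi t0) = cc" and dn: "dpoly c p (Phi t0) (f (Phi t0)) < 0"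
        using adm_frontier[OF adm qf] by auto
      obtain \<epsilon> where \<epsilon>: "\<epsilon> > 0" "\<forall>z\<in>ball (Phi t0) \<epsilon>. ?W z < cc \<longrightarrow> z \<in> interior S"
        using adm_loc[OF adm q] by blast
      obtain d1 where d1: "d1 > 0" "\<And>s. s \<in> {0..} \<Longrightarrow> dist s t0 < d1 \<Longrightarrow> dist (Phi s) (Phi t0) < \<epsilon>"
        using ct0 \<epsilon>(1) unfolding continuous_within_eps_delta by blast
      have der: "((\<lambda>s. ?W (Phi s)) has_real_derivative dpoly c p (Phi t0) (f (Phi t0))) (at t0 within {0..})"
        using Wder[OF t0ge] gS[OF q] by simp
      obtain d2 where d2: "d2 > 0" "\<And>h. h > 0 \<Longrightarrow> t0 + h \<in> {0..} \<Longrightarrow> h < d2 \<Longrightarrow> ?W (Phi t0) > ?W (Phi (t0 + h))"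
        using has_real_derivative_neg_dec_right[OF der dn] by blast
      show ?thesis
      proof (rule that[of "min d1 d2"])
        show "min d1 d2 > 0" using d1 d2 by simp
        fix s assume s: "t0 \<le> s" "s < t0 + min d1 d2"
        show "Phi s \<in> S"
        proof (cases "s = t0")
          case True then show ?thesis using q by simp
        next
          case False
          then have h: "s - t0 > 0" using s by simp
          have "?W (Phi (t0 + (s - t0))) < ?W (Phi t0)" using d2(2)[OF h] s t0ge by simp
          then have "?W (Phi s) < cc" using Wq by simp
          moreover have "dist (Phi s) (Phi t0) < \<epsilon>" using d1(2)[of s] s t0ge by (simp add: dist_real_def)
          ultimately have "Phi s \<in> interior S" using \<epsilon>(2) by (simp add: dist_commute)
          then show ?thesis using interior_subset by blast
        qed
      qed
    qed
    have "t0 + \<delta> \<le> t0"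
    proof -
      have "t0 + \<delta> \<le> Inf E"
      proof (rule cInf_greatest)
        show "E \<noteq> {}" using tE by blast
        fix s assume sE: "s \<in> E"
        show "t0 + \<delta> \<le> s"
        proof (rule ccontr)
          assume "\<not> t0 + \<delta> \<le> s"
          then have "Phi s \<in> S" using \<delta>(2)[OF t0le[OF sE]] by simp
          then show False using sE by (simp add: E_def)
        qed
      qed
      then show ?thesis by (simp add: t0_def)
    qed
    then show False using \<delta>(1) by simp
  qed
  have Phider': "(Phi has_vector_derivative f (Phi t)) (at t within {0..})" if "t \<ge> 0" for t
    using Phider[OF that] gS[OF inv[OF that]] by simp
  define h where "h t = ?W (Phi t)" for t
  define dh where "dh t = dpoly c p (Phi t) (f (Phi t))" for t
  have hder: "(h has_real_derivative dh t) (at t within {0..})" if "t \<ge> 0" for t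
    using Wder[OF that] gS[OF inv[OF that]] unfolding h_def[abs_def] dh_def by simp
  have dhle: "dh t \<le> 0" if "t \<ge> 0" for t
    using G_dneg[of "Phi t" c p f] SG inv[OF that] f0 by (auto simp: dh_def)
  have hge: "h t \<ge> 0" if "t \<ge> 0" for t
    using G_nonneg[of "Phi t" c p f] SG inv[OF that] by (auto simp: h_def)
  have mvt: "\<exists>\<xi>\<in>{a<..<b}. h b - h a = dh \<xi> * (b - a)" if "0 \<le> a" "a < b" for a b
  proof -
    have "(h has_derivative (\<lambda>u. dh x * u)) (at x within {a..b})" if "a \<le> x" "x \<le> b" for x
    proof -
      have "(h has_real_derivative dh x) (at x within {a..b})"
        by (rule has_field_derivative_subset[OF hder]) (use \<open>0 \<le> a\<close> that in auto)
      then show ?thesis by (simp add: has_field_derivative_def)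
    qed
    from mvt_simple[OF \<open>a < b\<close> this] show ?thesis by auto
  qed
  have hmono: "h b \<le> h a" if "0 \<le> a" "a \<le> b" for a b
  proof (cases "a = b")
    case False
    then have "a < b" using that by simp
    from mvt[OF that(1) this] obtain \<xi> where "\<xi> \<in> {a<..<b}" "h b - h a = dh \<xi> * (b - a)" by blast
    moreover have "dh \<xi> \<le> 0" using dhle[of \<xi>] \<open>\<xi> \<in> {a<..<b}\<close> that by simp
    ultimately show ?thesis using \<open>a < b\<close> mult_nonpos_nonneg[of "dh \<xi>" "b - a"] by simp
  qed simp
  have stepA: "\<exists>t\<ge>0. h t < \<eta>" if "\<eta> > 0" for \<eta>
  proof (rule ccontr)
    assume "\<not> (\<exists>t\<ge>0. h t < \<eta>)"
    then have hb: "h t \<ge> \<eta>" if "t \<ge> 0" for t using that by force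
    define K' where "K' = S \<inter> {x. ?W x \<ge> \<eta>}"
    have "closed {x. (\<lambda>x. \<eta>) x \<le> ?W x}"
      by (rule closed_Collect_le[OF continuous_on_const taylor_cont])
    then have cK': "compact K'" unfolding K'_def using Scomp by (rule compact_Int_closed[rotated])
    have "Phi 0 \<in> K'" using hb[of 0] inv[of 0] by (simp add: K'_def h_def)
    then have neK': "K' \<noteq> {}" by blast
    have "continuous_on K' (\<lambda>x. dpoly c p x (f x))"
      using continuous_on_subset[OF dpoly_cont[OF fc]] by blast
    then obtain xm where xm: "xm \<in> K'" and xmax: "\<And>y. y \<in> K' \<Longrightarrow> dpoly c p y (f y) \<le> dpoly c p xm (f xm)"
      using continuous_attains_sup[OF cK' neK'] by blast
    define m where "m = dpoly c p xm (f xm)"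
    have "xm \<noteq> 0" using xm \<open>\<eta> > 0\<close> taylor0[of c p] by (auto simp: K'_def)
    then have m0: "m < 0" using G_prop[of xm c p f] xm SG by (auto simp: K'_def m_def)
    define T where "T = (h 0 + 1) / (- m)"
    have T0: "T > 0" unfolding T_def using m0 hge[of 0] by (simp add: field_simps)
    obtain \<xi> where \<xi>: "\<xi> \<in> {0<..<T}" and eq: "h T - h 0 = dh \<xi> * (T - 0)" using mvt[of 0 T] T0 by auto
    have "Phi \<xi> \<in> K'" using hb[of \<xi>] inv[of \<xi>] \<xi> by (simp add: K'_def h_def)
    then have "dh \<xi> \<le> m" using xmax by (simp add: dh_def m_def)
    then have "dh \<xi> * T \<le> m * T" using T0 by (simp add: mult_right_mono)
    also have "m * T = - (h 0 + 1)" unfolding T_def using m0 by (simp add: field_simps)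
    finally have "h T \<le> -1" using eq by simp
    then show False using hge[of T] T0 by simp
  qed
  have conv: "(Phi \<longlongrightarrow> 0) at_top"
    unfolding tendsto_iff
  proof (intro allI impI)
    fix e :: real assume e: "e > 0"
    define K'' where "K'' = S \<inter> {x. norm x \<ge> e}"
    have "closed {x::real^'n. (\<lambda>x. e) x \<le> norm x}"
      by (rule closed_Collect_le[OF continuous_on_const continuous_on_norm_id])
    then have cK: "compact K''" unfolding K''_def using Scomp by (rule compact_Int_closed[rotated])
    show "\<forall>\<^sub>F t in at_top. dist (Phi t) 0 < e"
    proof (cases "K'' = {}")
      case True
      then have "dist (Phi t) 0 < e" if "t \<ge> 0" for t using inv[OF that] by (force simp: K''_def)
      then show ?thesis unfolding eventually_at_top_linorder by blast
    next
      case False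
      have "continuous_on K'' ?W" using continuous_on_subset[OF taylor_cont] by blast
      then obtain xm where xm: "xm \<in> K''" and xmin: "\<And>y. y \<in> K'' \<Longrightarrow> ?W xm \<le> ?W y"
        using continuous_attains_inf[OF cK False] by blast
      have "xm \<noteq> 0" using xm e by (auto simp: K''_def)
      then have mu0: "?W xm > 0" using G_prop[of xm c p f] xm SG by (auto simp: K''_def)
      obtain t1 where t1: "t1 \<ge> 0" "h t1 < ?W xm" using stepA[OF mu0] by blast
      have "dist (Phi t) 0 < e" if "t \<ge> t1" for t
      proof (rule ccontr)
        assume "\<not> dist (Phi t) 0 < e"
        then have "Phi t \<in> K''" using inv[of t] that t1 by (auto simp: K''_def)
        then have "?W xm \<le> h t" using xmin by (simp add: h_def)
        moreover have "h t \<le> h t1" using hmono[OF t1(1) that] .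
        ultimately show False using t1(2) by simp
      qed
      then show ?thesis unfolding eventually_at_top_linorder by blast
    qed
  qed
  show ?thesis unfolding domain_of_attraction_def
    by (intro CollectI exI[of _ Phi] conjI allI impI Phi0 Phider' conv)
qed

theorem corollary2p4:
  fixes f :: "real^'n \<Rightarrow> real^'n"
    and A :: "real^'n^'n"
    and V :: "real^'n \<Rightarrow> real"
    and DV :: "real^'n \<Rightarrow> real^'n \<Rightarrow> real"
    and U :: "(real^'n) set"
    and c :: "('n \<Rightarrow> nat) \<Rightarrow> real"
    and p :: nat
  assumes f_analytic: "real_analytic_vf f"
    and f0: "f 0 = 0"
    and A_deriv: "(f has_derivative (\<lambda>h. A *v h)) (at 0)"
    and A_hurwitz: "\<And>mu. complex_eigenvalue A mu \<Longrightarrow> Re mu < 0"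
    and U_open: "open U" and U0: "0 \<in> U"
    and V_analytic: "real_analytic_on V U"
    and V_deriv: "\<And>x. x \<in> U \<Longrightarrow> (V has_derivative DV x) (at x)"
    and V_eq: "\<And>x. x \<in> U \<Longrightarrow> DV x (f x) = - ((norm x) ^ 2)"
    and V0: "V 0 = 0"
    and V_series: "power_series_at0 c V"
    and p2: "p \<ge> 2"
  shows "(\<forall>c1 c2 S1 S2. c1 > 0 \<longrightarrow> c2 > 0 \<longrightarrow>
            admissible (taylor_poly c p) f c1 S1 \<longrightarrow> admissible (taylor_poly c p) f c2 S2 \<longrightarrow>
            S1 \<subseteq> S2 \<or> S2 \<subseteq> S1)
       \<and> \<Union>{S. \<exists>c'>0. admissible (taylor_poly c p) f c' S} \<subseteq> domain_of_attraction f"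
  proof -
  have part1: "\<forall>c1 c2 S1 S2. c1 > 0 \<longrightarrow> c2 > 0 \<longrightarrow>
            admissible (taylor_poly c p) f c1 S1 \<longrightarrow> admissible (taylor_poly c p) f c2 S2 \<longrightarrow>
            S1 \<subseteq> S2 \<or> S2 \<subseteq> S1"
  proof (intro allI impI)
    fix c1 c2 S1 S2 assume a1: "admissible (taylor_poly c p) f c1 S1" and a2: "admissible (taylor_poly c p) f c2 S2"
    show "S1 \<subseteq> S2 \<or> S2 \<subseteq> S1"
    proof (cases "c1 \<le> c2")
      case True then show ?thesis using adm_subset[OF a1 a2] by blast
    next
      case False then show ?thesis using adm_subset[OF a2 a1] by simp
    qed
  qed
  have part2: "\<Union>{S. \<exists>c'>0. admissible (taylor_poly c p) f c' S} \<subseteq> domain_of_attraction f"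
  proof
    fix x assume "x \<in> \<Union>{S. \<exists>c'>0. admissible (taylor_poly c p) f c' S}"
    then obtain S c' where "admissible (taylor_poly c p) f c' S" "x \<in> S" by blast
    then show "x \<in> domain_of_attraction f" by (rule attraction[OF f_analytic f0])
  qed
  show ?thesis using part1 part2 by blast
qed

end
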